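(* Every nonzero element $a$ of a finite additive poset $A$ can be written as a sum of pairwise independent atoms of $A$. Moreover, in any such expansion of $a$, all the atoms lie in the tail $A_a$ of $a$.
   Context: An additive poset is a pair $(A,\le)$ where $A$ is an abelian group and $\le$ is a partial order on $A$ such that for all $a,b,c\in A$: $(\ast)$ if $b\le a$ and $c\le a$ then $b+c\le a$; $(\ast\ast)$ if $a\le b$ and $a\le c$ then $a\le a+b+c$. The tail of $a$ is $A_a=\{x:x\le a\}$. Elements $x,y$ are independent if $x\le x+y$. An atom is a nonzero $x$ with $A_x=\{0,x\}$. *)

theory Defs
  imports Main
begin

definition additive_poset :: "('a::ab_group_add \<Rightarrow> 'a \<Rightarrow> bool) \<Rightarrow> bool" where
  "additive_poset le \<longleftrightarrow>
     (\<forall>x. le x x) \<and>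
     (\<forall>x y. le x y \<and> le y x \<longrightarrow> x = y) \<and>
     (\<forall>x y z. le x y \<and> le y z \<longrightarrow> le x z) \<and>
     (\<forall>a b c. le b a \<and> le c a \<longrightarrow> le (b + c) a) \<and>
     (\<forall>a b c. le a b \<and> le a c \<longrightarrow> le a (a + b + c))"

definition tail :: "('a \<Rightarrow> 'a \<Rightarrow> bool) \<Rightarrow> 'a \<Rightarrow> 'a set" where
  "tail le a = {x. le x a}"

definition independent :: "('a::ab_group_add \<Rightarrow> 'a \<Rightarrow> bool) \<Rightarrow> 'a \<Rightarrow> 'a \<Rightarrow> bool" where
  "independent le x y \<longleftrightarrow> le x (x + y)"

definition atom :: "('a::ab_group_add \<Rightarrow> 'a \<Rightarrow> bool) \<Rightarrow> 'a \<Rightarrow> bool" where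
  "atom le x \<longleftrightarrow> x \<noteq> 0 \<and> tail le x = {0, x}"

definition atom_expansion :: "('a::ab_group_add \<Rightarrow> 'a \<Rightarrow> bool) \<Rightarrow> 'a list \<Rightarrow> 'a \<Rightarrow> bool" where
  "atom_expansion le xs a \<longleftrightarrow>
     sum_list xs = a \<and>
     (\<forall>x\<in>set xs. atom le x) \<and>
     (\<forall>i<length xs. \<forall>j<length xs. i \<noteq> j \<longrightarrow> independent le (xs ! i) (xs ! j))"

end

theory Submission
  imports Defs
begin

lemma ap_refl: "additive_poset le \<Longrightarrow> le x x" unfolding additive_poset_def by blast
lemma ap_antisym: "additive_poset le \<Longrightarrow> le x y \<Longrightarrow> le y x \<Longrightarrow> x = y" unfolding additive_poset_def by blast
lemma ap_trans: "additive_poset le \<Longrightarrow> le x y \<Longrightarrow> le y z \<Longrightarrow> le x z" unfolding additive_poset_def by blast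
lemma ap_add: "additive_poset le \<Longrightarrow> le b a \<Longrightarrow> le c a \<Longrightarrow> le (b + c) a" unfolding additive_poset_def by blast
lemma ap_ind: "additive_poset le \<Longrightarrow> le a b \<Longrightarrow> le a c \<Longrightarrow> le a (a + b + c)" unfolding additive_poset_def by blast

definition mul :: "nat \<Rightarrow> 'a::ab_group_add \<Rightarrow> 'a" where "mul k a = (((+) a) ^^ k) 0"

lemma mul_Suc: "mul (Suc k) a = a + mul k a" by (simp add: mul_def)
lemma mul_0: "mul 0 a = 0" by (simp add: mul_def)
lemma mul_add: "mul (k + m) a = mul k a + mul m a"
  by (induction k) (auto simp: mul_Suc mul_0 add.assoc)

lemma mul_le: assumes ap: "additive_poset le" and k: "k \<ge> 1" shows "le (mul k a) a"
  using k
proof (induction k rule: nat_induct_at_least)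
  case base then show ?case by (simp add: mul_Suc mul_0 ap_refl[OF ap])
next
  case (Suc n) then show ?case by (simp add: mul_Suc ap_add[OF ap] ap_refl[OF ap])
qed

lemma mul_period: "\<exists>n\<ge>1. mul n (a::'a::{ab_group_add,finite}) = 0"
proof -
  have "\<not> inj (\<lambda>k::nat. mul k a)"
  proof
    assume "inj (\<lambda>k::nat. mul k a)"
    moreover have "finite (range (\<lambda>k::nat. mul k a))" by simp
    ultimately have "finite (UNIV :: nat set)" by (rule finite_imageD[rotated])
    then show False by simp
  qed
  then obtain i j :: nat where ij: "i \<noteq> j" "mul i a = mul j a" unfolding inj_def by blast
  show ?thesis
  proof (cases "i < j")
    case True
    have "mul j a = mul (j - i) a + mul i a" using mul_add[of "j-i" i a] True by simp
    then show ?thesis using ij True by (intro exI[of _ "j-i"]) auto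
  next
    case False
    then have "j < i" using ij by simp
    have "mul i a = mul (i - j) a + mul j a" using mul_add[of "i-j" j a] \<open>j<i\<close> by simp
    then show ?thesis using ij \<open>j<i\<close> by (intro exI[of _ "i-j"]) auto
  qed
qed

lemma neg_le:
  fixes a :: "'a::{ab_group_add,finite}" and le :: "'a \<Rightarrow> 'a \<Rightarrow> bool"
  assumes ap: "additive_poset le" shows "le (- a) a"
proof -
  obtain n where n: "n \<ge> 1" "mul n a = 0" using mul_period by blast
  show ?thesis
  proof (cases "n = 1")
    case True
    then have "a = 0" using n by (simp add: mul_Suc mul_0)
    then show ?thesis using ap_refl[OF ap] by simp
  next
    case False
    then obtain m where m: "n = Suc m" "m \<ge> 1" using n by (cases n) auto
    have "a + mul m a = 0" using n m by (simp add: mul_Suc)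
    then have "mul m a = - a" using minus_unique by metis
    then show ?thesis using mul_le[OF ap m(2), of a] by simp
  qed
qed

lemma two_zero:
  fixes a :: "'a::{ab_group_add,finite}" and le :: "'a \<Rightarrow> 'a \<Rightarrow> bool"
  assumes ap: "additive_poset le" shows "a + a = 0"
proof -
  have "le (- a) a" "le a (- a)" using neg_le[OF ap, of a] neg_le[OF ap, of "-a"] by auto
  then have "a = - a" using ap_antisym[OF ap] by blast
  then show ?thesis by (metis add.right_inverse)
qed

lemma zero_le:
  fixes a :: "'a::{ab_group_add,finite}" and le :: "'a \<Rightarrow> 'a \<Rightarrow> bool"
  assumes ap: "additive_poset le" shows "le 0 a"
  using ap_add[OF ap ap_refl[OF ap] ap_refl[OF ap], of a] two_zero[OF ap, of a] by simp

lemma indep_sym: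
  fixes x :: "'a::{ab_group_add,finite}" and le :: "'a \<Rightarrow> 'a \<Rightarrow> bool"
  assumes ap: "additive_poset le" and "le x (x + y)" shows "le y (x + y)"
proof -
  have "le (x + (x + y)) (x + y)" using ap_add[OF ap assms(2) ap_refl[OF ap]] .
  moreover have "x + (x + y) = y" using two_zero[OF ap, of x] by (metis add.assoc add_0)
  ultimately show ?thesis by simp
qed

lemma lemL:
  fixes y :: "'a::{ab_group_add,finite}" and le :: "'a \<Rightarrow> 'a \<Rightarrow> bool"
  assumes ap: "additive_poset le" and "le y b" and "le b (b + c)" shows "le y (y + c)"
proof -
  have "le y (b + c)" using ap_trans[OF ap assms(2,3)] .
  then have "le y (y + b + (b + c))" using ap_ind[OF ap assms(2)] by blast
  moreover have "y + b + (b + c) = y + c" using two_zero[OF ap, of b]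
    by (metis add.assoc add_0)
  ultimately show ?thesis by simp
qed

lemma sum_indep:
  fixes x :: "'a::{ab_group_add,finite}" and le :: "'a \<Rightarrow> 'a \<Rightarrow> bool"
  assumes ap: "additive_poset le"
  shows "(\<forall>y\<in>set ys. le x (x + y)) \<Longrightarrow> le x (x + sum_list ys)"
proof (induction ys)
  case Nil then show ?case using ap_refl[OF ap] by simp
next
  case (Cons y ys)
  then have "le x (x + y)" "le x (x + sum_list ys)" by auto
  then have "le x (x + (x + y) + (x + sum_list ys))" using ap_ind[OF ap] by blast
  moreover have "x + (x + y) + (x + sum_list ys) = x + sum_list (y # ys)"
    using two_zero[OF ap, of x] by (simp add: algebra_simps)
  ultimately show ?case by simp
qed

lemma part2:
  fixes a :: "'a::{ab_group_add,finite}" and le :: "'a \<Rightarrow> 'a \<Rightarrow> bool"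
  assumes ap: "additive_poset le" and ex: "atom_expansion le xs a"
  shows "set xs \<subseteq> tail le a"
proof
  fix x assume "x \<in> set xs"
  then obtain i where i: "i < length xs" "x = xs ! i" by (auto simp: in_set_conv_nth)
  define others where "others = take i xs @ drop (Suc i) xs"
  have split: "xs = take i xs @ xs ! i # drop (Suc i) xs" using i id_take_nth_drop by blast
  have sum: "sum_list xs = x + sum_list others"
    unfolding others_def i(2) by (subst split) (simp add: algebra_simps)
  have "\<forall>y\<in>set others. le x (x + y)"
  proof
    fix y assume "y \<in> set others"
    then have "y \<in> set (take i xs) \<or> y \<in> set (drop (Suc i) xs)" by (simp add: others_def)
    then obtain j where "j < length xs" "j \<noteq> i" "y = xs ! j"
    proof
      assume "y \<in> set (take i xs)"
      then obtain k where "k < length (take i xs)" "y = take i xs ! k" by (auto simp: in_set_conv_nth)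
      then show ?thesis using that[of k] i(1) by simp
    next
      assume "y \<in> set (drop (Suc i) xs)"
      then obtain k where "k < length (drop (Suc i) xs)" "y = drop (Suc i) xs ! k" by (auto simp: in_set_conv_nth)
      then show ?thesis using that[of "Suc i + k"] i(1) by simp
    qed
    then show "le x (x + y)" using ex i unfolding atom_expansion_def independent_def by auto
  qed
  then have "le x (sum_list xs)" using sum_indep[OF ap] sum by simp
  then show "x \<in> tail le a" using ex by (simp add: atom_expansion_def tail_def)
qed

lemma pw_append:
  assumes "\<forall>i<length ys. \<forall>j<length ys. i \<noteq> j \<longrightarrow> R (ys ! i) (ys ! j)"
    and "\<forall>i<length zs. \<forall>j<length zs. i \<noteq> j \<longrightarrow> R (zs ! i) (zs ! j)"
    and "\<forall>y\<in>set ys. \<forall>z\<in>set zs. R y z \<and> R z y"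
  shows "\<forall>i<length (ys @ zs). \<forall>j<length (ys @ zs). i \<noteq> j \<longrightarrow> R ((ys @ zs) ! i) ((ys @ zs) ! j)"
proof (intro allI impI)
  fix i j assume ij: "i < length (ys @ zs)" "j < length (ys @ zs)" "i \<noteq> j"
  show "R ((ys @ zs) ! i) ((ys @ zs) ! j)"
  proof (cases "i < length ys"; cases "j < length ys")
    assume "i < length ys" "j < length ys" then show ?thesis using assms(1) ij by (simp add: nth_append)
  next
    assume "i < length ys" "\<not> j < length ys" then show ?thesis using assms(3) ij by (simp add: nth_append)
  next
    assume "\<not> i < length ys" "j < length ys" then show ?thesis using assms(3) ij by (simp add: nth_append)
  next
    assume "\<not> i < length ys" "\<not> j < length ys" then show ?thesis using assms(2) ij by (simp add: nth_append)
  qed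
qed

lemma part1:
  fixes a :: "'a::{ab_group_add,finite}" and le :: "'a \<Rightarrow> 'a \<Rightarrow> bool"
  assumes ap: "additive_poset le"
  shows "a \<noteq> 0 \<Longrightarrow> \<exists>xs. atom_expansion le xs a"
proof (induction "card (tail le a)" arbitrary: a rule: less_induct)
  case less
  have 0: "0 \<in> tail le a" "a \<in> tail le a" using zero_le[OF ap] ap_refl[OF ap] by (auto simp: tail_def)
  show ?case
  proof (cases "atom le a")
    case True
    then show ?thesis by (intro exI[of _ "[a]"]) (simp add: atom_expansion_def)
  next
    case False
    then obtain b where b: "le b a" "b \<noteq> 0" "b \<noteq> a"
      using less.prems 0 by (auto simp: atom_def tail_def)
    define c where "c = a + b"
    have bc: "b + c = a" unfolding c_def using two_zero[OF ap, of b] by (simp add: algebra_simps)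
    have cle: "le c a" unfolding c_def using ap_add[OF ap ap_refl[OF ap] b(1)] .
    have c0: "c \<noteq> 0" using b bc by auto
    have ca: "c \<noteq> a" using b bc by auto
    have lt: "card (tail le x) < card (tail le a)" if "le x a" "x \<noteq> a" for x
    proof (rule psubset_card_mono)
      show "finite (tail le a)" by simp
      have "tail le x \<subseteq> tail le a" using that ap_trans[OF ap] by (auto simp: tail_def)
      moreover have "a \<notin> tail le x" using that ap_antisym[OF ap] by (auto simp: tail_def)
      ultimately show "tail le x \<subset> tail le a" using 0 by blast
    qed
    obtain ys where ys: "atom_expansion le ys b" using less.hyps[OF lt[OF b(1) b(3)] b(2)] by blast
    obtain zs where zs: "atom_expansion le zs c" using less.hyps[OF lt[OF cle ca] c0] by blast
    have ysb: "\<forall>y\<in>set ys. le y b" using part2[OF ap ys] by (auto simp: tail_def)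
    have zsc: "\<forall>z\<in>set zs. le z c" using part2[OF ap zs] by (auto simp: tail_def)
    have bbc: "le b (b + c)" using b bc by simp
    have cross: "independent le y z \<and> independent le z y" if "y \<in> set ys" "z \<in> set zs" for y z
    proof -
      have y: "le y b" and z: "le z c" using that ysb zsc by auto
      have "le y (y + c)" using lemL[OF ap y bbc] .
      then have "le c (y + c)" using indep_sym[OF ap] by blast
      then have "le c (c + y)" by (simp add: add.commute)
      then have zy: "le z (z + y)" using lemL[OF ap z] by blast
      then have "le y (z + y)" using indep_sym[OF ap] by blast
      then have "le y (y + z)" by (simp add: add.commute)
      then show ?thesis using zy by (simp add: independent_def)
    qed
    have "atom_expansion le (ys @ zs) a"
      unfolding atom_expansion_def
    proof (intro conjI)
      show "sum_list (ys @ zs) = a" using ys zs bc by (simp add: atom_expansion_def)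
      show "\<forall>x\<in>set (ys @ zs). atom le x" using ys zs by (auto simp: atom_expansion_def)
      show "\<forall>i<length (ys @ zs). \<forall>j<length (ys @ zs). i \<noteq> j \<longrightarrow> independent le ((ys @ zs) ! i) ((ys @ zs) ! j)"
        by (rule pw_append) (use ys zs cross in \<open>auto simp: atom_expansion_def\<close>)
    qed
    then show ?thesis by blast
  qed
qed

theorem theorem6p3:
  fixes le :: "'a::{ab_group_add, finite} \<Rightarrow> 'a \<Rightarrow> bool" and a :: 'a
  assumes "additive_poset le" and "a \<noteq> 0"
  shows "(\<exists>xs. atom_expansion le xs a) \<and>
         (\<forall>xs. atom_expansion le xs a \<longrightarrow> set xs \<subseteq> tail le a)"
  using part1[OF assms(1) assms(2)] part2[OF assms(1)] by blast

end
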